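(* Let $\mathcal{G}=(\mathcal{V},\mathcal{E},\rho)$ be a rooted weighted directed graph with nonnegative edge weights $w_{ij}$, let $L$ be either (a) the Laplacian of $\mathcal{G}$, with $\mathcal{D}$ the set of all trees, or (b) the root-weighted Laplacian of $\mathcal{G}$, with $\mathcal{D}$ the set of single-rooted trees, so that $Z=\det L=\sum_{d\in\mathcal{D}}w(d)$; assume $Z>0$. Let $B=L^{-\top}$ and, for each edge $(i\to j)\in\mathcal{E}$ and indices $i',j'\in\{1,\dots,N\}$, let $L'^{\,ij}_{i'j'}=\partial L_{i'j'}/\partial w_{ij}$ (a constant). Let $r_{ij}\in\mathbb{R}^R$ and $s_{ij}\in\mathbb{R}^S$ be given vectors for each edge, and set $r(d)=\sum_{(i\to j)\in d}r_{ij}$, $s(d)=\sum_{(i\to j)\in d}s_{ij}$, $\bar{t}=\sum_{d\in\mathcal{D}}w(d)\,r(d)s(d)^\top$, $\bar{r}=\sum_{d\in\mathcal{D}}w(d)r(d)$, $\bar{s}=\sum_{d\in\mathcal{D}}w(d)s(d)$, $\bar{f}=\sum_{(i\to j)\in\mathcal{E}}\bar{w}_{ij}\,r_{ij}s_{ij}^\top$, and for $j',l'\in\{1,\dots,N\}$ $$\hat{r}_{j'l'}=\sum_{(k\to l)\in\mathcal{E}}\sum_{k'=1}^{N}B_{k'j'}\,L'^{\,kl}_{k'l'}\,w_{kl}\,r_{kl},\qquad \hat{s}_{j'l'}=\sum_{(i\to j)\in\mathcal{E}}\sum_{i'=1}^{N}B_{i'l'}\,L'^{\,ij}_{i'j'}\,w_{ij}\,s_{ij}.$$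 Then $$\bar{t}=\bar{f}+\frac{1}{Z}\,\bar{r}\,\bar{s}^\top-Z\sum_{j',l'=1}^{N}\hat{r}_{j'l'}\,\hat{s}_{j'l'}^\top.$$
   Context: A rooted weighted directed graph $\mathcal{G}=(\mathcal{V},\mathcal{E},\rho)$ has node set $\mathcal{V}=\{1,\dots,N\}\cup\{\rho\}$ with designated root $\rho$; $\mathcal{E}$ is a set of edges $(i\to j)$ between distinct nodes, at most one edge per ordered pair, with weight $w_{ij}$ (set $w_{ij}=0$ if there is no edge); the root has no incoming edges. A tree $d$ is a set of $N$ edges with no cycle such that every non-root node has exactly one incoming edge and $\rho$ has at least one outgoing edge; it is single-rooted if $\rho$ has exactly one outgoing edge in $d$. $w(d)=\prod_{(i\to j)\in d}w_{ij}$ and $\bar{w}_{ij}=\sum_{d\in\mathcal{D}:(i\to j)\in d}w(d)$. The Laplacian $L\in\mathbb{R}^{N\times N}$ (indices $i,j\in\{1,\dots,N\}$) has $L_{jj}=\sum_{i'\in\mathcal{V}\setminus\{j\}}w_{i'j}$ and $L_{ij}=-w_{ij}$ for $i\neq j$. The root-weighted Laplacian $\hat{L}\in\mathbb{R}^{N\times N}$ has $\hat{L}_{1j}=w_{\rho j}$ (first row), and for $i\neq 1$: $\hat{L}_{jj}=\sum_{i'\in\mathcal{V}\setminus\{\rho,j\}}w_{i'j}$, $\hat{L}_{ij}=-w_{ij}$ for $i\neq j$. In case (a), $\det L$ equals the sum of $w(d)$ over all trees; in case (b), $\det\hat{L}$ equals the sum of $w(d)$ over all single-rooted trees. *)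

theory Defs
  imports "HOL-Analysis.Analysis"
begin

text \<open>Nodes of the rooted graph: the non-root nodes 1..N are the elements of a finite
type 'n (so N = CARD('n)); the root \<rho> is None, node k is Some k.
Weights are given as a function w on ordered pairs of nodes (w i j = 0 if there is no edge).\<close>

type_synonym 'n node = "'n option"

definition root :: "'n node" where "root = None"

definition rooted_wdigraph ::
  "('n node \<times> 'n node) set \<Rightarrow> ('n node \<Rightarrow> 'n node \<Rightarrow> real) \<Rightarrow> bool" where
  "rooted_wdigraph E w \<longleftrightarrow>
     (\<forall>(i,j)\<in>E. i \<noteq> j \<and> j \<noteq> root) \<and>
     (\<forall>i j. (i,j) \<notin> E \<longrightarrow> w i j = 0) \<and>
     (\<forall>i j. w i j \<ge> 0)"

definition is_tree :: "('n::finite node \<times> 'n node) set \<Rightarrow> ('n node \<times> 'n node) set \<Rightarrow> bool" where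
  "is_tree E d \<longleftrightarrow> d \<subseteq> E \<and> card d = CARD('n) \<and> acyclic d \<and>
     (\<forall>j::'n. card {i. (i, Some j) \<in> d} = 1) \<and> (\<exists>j. (root, j) \<in> d)"

definition single_rooted :: "('n node \<times> 'n node) set \<Rightarrow> bool" where
  "single_rooted d \<longleftrightarrow> card {j. (root, j) \<in> d} = 1"

datatype lap_case = AllTrees | SingleRooted

definition trees :: "lap_case \<Rightarrow> ('n::finite node \<times> 'n node) set \<Rightarrow> ('n node \<times> 'n node) set set" where
  "trees c E = {d. is_tree E d \<and> (c = SingleRooted \<longrightarrow> single_rooted d)}"

text \<open>Laplacian (case a).  Row index = source, column index = target.\<close>
definition laplacian :: "('n::finite node \<Rightarrow> 'n node \<Rightarrow> real) \<Rightarrow> real^'n^'n" where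
  "laplacian w = (\<chi> i j. if i = j then (\<Sum>i'\<in>UNIV - {Some j}. w i' (Some j))
                         else - w (Some i) (Some j))"

text \<open>Root-weighted Laplacian (case b); the parameter one is the node labelled 1,
whose row is replaced by the root weights.\<close>
definition root_laplacian :: "'n::finite \<Rightarrow> ('n node \<Rightarrow> 'n node \<Rightarrow> real) \<Rightarrow> real^'n^'n" where
  "root_laplacian one w = (\<chi> i j. if i = one then w root (Some j)
       else if i = j then (\<Sum>i'\<in>UNIV - {root, Some j}. w i' (Some j))
       else - w (Some i) (Some j))"

definition lap :: "lap_case \<Rightarrow> 'n::finite \<Rightarrow> ('n node \<Rightarrow> 'n node \<Rightarrow> real) \<Rightarrow> real^'n^'n" where
  "lap c one w = (case c of AllTrees \<Rightarrow> laplacian w | SingleRooted \<Rightarrow> root_laplacian one w)"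

definition upd_w :: "('a \<Rightarrow> 'a \<Rightarrow> real) \<Rightarrow> 'a \<Rightarrow> 'a \<Rightarrow> real \<Rightarrow> 'a \<Rightarrow> 'a \<Rightarrow> real" where
  "upd_w w k l x = (\<lambda>a b. if a = k \<and> b = l then x else w a b)"

definition lap_deriv :: "lap_case \<Rightarrow> 'n::finite \<Rightarrow> ('n node \<Rightarrow> 'n node \<Rightarrow> real)
     \<Rightarrow> 'n node \<Rightarrow> 'n node \<Rightarrow> 'n \<Rightarrow> 'n \<Rightarrow> real" where
  "lap_deriv c one w k l k' l' = deriv (\<lambda>x. lap c one (upd_w w k l x) $ k' $ l') (w k l)"

definition tree_weight :: "('a \<Rightarrow> 'a \<Rightarrow> real) \<Rightarrow> ('a \<times> 'a) set \<Rightarrow> real" where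
  "tree_weight w d = (\<Prod>(i,j)\<in>d. w i j)"

definition edge_bar :: "('a \<times> 'a) set set \<Rightarrow> ('a \<Rightarrow> 'a \<Rightarrow> real) \<Rightarrow> 'a \<Rightarrow> 'a \<Rightarrow> real" where
  "edge_bar D w i j = (\<Sum>d\<in>{d\<in>D. (i,j) \<in> d}. tree_weight w d)"

definition tree_sum :: "('a \<Rightarrow> 'a \<Rightarrow> 'v::comm_monoid_add) \<Rightarrow> ('a \<times> 'a) set \<Rightarrow> 'v" where
  "tree_sum r d = (\<Sum>(i,j)\<in>d. r i j)"

definition outer :: "real^'r \<Rightarrow> real^'s \<Rightarrow> real^'s^'r" where
  "outer x y = (\<chi> a b. x $ a * y $ b)"

end

theory Submission
  imports Defs "HOL-Combinatorics.Permutations"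
begin

definition qstep :: "('n \<Rightarrow> 'n option) \<Rightarrow> 'n option \<Rightarrow> 'n option" where
  "qstep f x = (case x of None \<Rightarrow> None | Some j \<Rightarrow> f j)"

definition reach :: "('n \<Rightarrow> 'n option) \<Rightarrow> 'n \<Rightarrow> bool" where
  "reach f j \<longleftrightarrow> (\<exists>k. (qstep f ^^ k) (Some j) = None)"

lemma qstep_None_pow[simp]: "(qstep f ^^ k) None = None"
  by (induction k) (auto simp: qstep_def)

lemma reach_rec: "reach f j \<longleftrightarrow> (case f j of None \<Rightarrow> True | Some b \<Rightarrow> reach f b)"
proof
  assume "reach f j"
  then obtain k where k: "(qstep f ^^ k) (Some j) = None" unfolding reach_def by blast
  show "(case f j of None \<Rightarrow> True | Some b \<Rightarrow> reach f b)"
  proof (cases "f j")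
    case (Some b)
    have "k \<noteq> 0" using k by (cases k) auto
    then obtain m where "k = Suc m" by (cases k) auto
    have "(qstep f ^^ Suc m) (Some j) = (qstep f ^^ m) (qstep f (Some j))"
      by (simp only: funpow_Suc_right comp_def)
    then have "(qstep f ^^ m) (Some b) = None" using k Some \<open>k = Suc m\<close>
      by (simp add: qstep_def)
    then show ?thesis using Some by (auto simp: reach_def)
  qed simp
next
  assume h: "(case f j of None \<Rightarrow> True | Some b \<Rightarrow> reach f b)"
  show "reach f j"
  proof (cases "f j")
    case None
    then have "(qstep f ^^ 1) (Some j) = None" by (simp add: qstep_def)
    then show ?thesis unfolding reach_def by blast
  next
    case (Some b)
    then obtain m where "(qstep f ^^ m) (Some b) = None" using h unfolding reach_def by auto
    moreover have "(qstep f ^^ Suc m) (Some j) = (qstep f ^^ m) (qstep f (Some j))"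
      by (simp only: funpow_Suc_right comp_def)
    ultimately have "(qstep f ^^ Suc m) (Some j) = None" using Some
      by (simp add: qstep_def)
    then show ?thesis unfolding reach_def by blast
  qed
qed

lemma reach_no_self: "reach f j \<Longrightarrow> f j \<noteq> Some j"
proof
  assume "reach f j" "f j = Some j"
  then obtain k where k: "(qstep f ^^ k) (Some j) = None" unfolding reach_def by blast
  have "(qstep f ^^ m) (Some j) = Some j" for m
    by (induction m) (auto simp: qstep_def \<open>f j = Some j\<close>)
  with k show False by simp
qed

definition ua :: "'n::finite option \<Rightarrow> 'n \<Rightarrow> real^'n" where
  "ua b j = (\<chi> i. (if i = j then 1 else 0) - (if b = Some i then 1 else 0))"

lemma det_ua_reach:
  fixes f :: "'n::finite \<Rightarrow> 'n option"
  assumes R: "\<forall>j. reach f j"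
  shows "det (\<chi> j. ua (f j) j) = 1"
proof -
  let ?A = "(\<chi> j. ua (f j) j) :: real^'n^'n"
  let ?P = "{p. p permutes (UNIV::'n set)}"
  let ?g = "\<lambda>p. of_int (sign p) * (\<Prod>i\<in>UNIV. ?A$i$p i)"
  have z: "?g p = 0" if p: "p \<in> ?P - {id}" for p
  proof (rule ccontr)
    assume nz: "?g p \<noteq> 0"
    have pp: "p permutes UNIV" using p by auto
    have ij: "inj p" using pp permutes_inj by blast
    have disj: "p i = i \<or> f i = Some (p i)" for i
    proof (rule ccontr)
      assume "\<not> (p i = i \<or> f i = Some (p i))"
      then have "?A$i$p i = 0" by (simp add: ua_def)
      then have "(\<Prod>i\<in>UNIV. ?A$i$p i) = 0" by (meson UNIV_I finite prod_zero)
      then show False using nz by simp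
    qed
    obtain j0 where j0: "p j0 \<noteq> j0" using p by (auto simp: fun_eq_iff)
    have "(qstep f ^^ k) (Some j0) = Some ((p ^^ k) j0) \<and> p ((p ^^ k) j0) \<noteq> (p ^^ k) j0" for k
    proof (induction k)
      case 0 then show ?case using j0 by simp
    next
      case (Suc k)
      let ?x = "(p ^^ k) j0"
      have fx: "f ?x = Some (p ?x)" using disj Suc.IH by metis
      have "p (p ?x) \<noteq> p ?x" using Suc.IH ij by (metis injD)
      then show ?case using Suc.IH fx by (simp add: qstep_def)
    qed
    then have "\<not> reach f j0" unfolding reach_def by auto
    then show False using R by blast
  qed
  have gid: "?g id = 1"
  proof -
    have "?A$i$id i = 1" for i using reach_no_self[of f i] R by (simp add: ua_def)
    then show ?thesis by simp
  qed
  have "det ?A = sum ?g ?P" unfolding det_def by simp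
  also have "\<dots> = ?g id + sum ?g (?P - {id})"
    by (subst sum.remove[of _ id]) (auto simp: permutes_id)
  also have "sum ?g (?P - {id}) = 0" using z by (intro sum.neutral) blast
  finally show ?thesis using gid by simp
qed

lemma det_zero_if_kernel:
  fixes A :: "real^'n^'n"
  assumes "A *v y = 0" "y \<noteq> 0"
  shows "det A = 0"
proof (rule ccontr)
  assume "det A \<noteq> 0"
  then have "invertible A" using invertible_det_nz by blast
  then have "inj ((*v) A)" by (rule inj_matrix_vector_mult)
  then show False using assms by (metis injD matrix_vector_mult_0_right)
qed

lemma det_ua_nreach:
  fixes f :: "'n::finite \<Rightarrow> 'n option"
  assumes R: "\<not> (\<forall>j. reach f j)"
  shows "det (\<chi> j. ua (f j) j) = 0"
proof (rule det_zero_if_kernel)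
  let ?y = "(\<chi> i. if reach f i then 0 else 1) :: real^'n"
  show "?y \<noteq> 0" using R by (auto simp: vec_eq_iff)
  have "(\<Sum>i\<in>UNIV. ua (f j) j $ i * ?y $ i) = 0" for j
  proof -
    have "(\<Sum>i\<in>UNIV. ua (f j) j $ i * ?y $ i) = 
       (\<Sum>i\<in>UNIV. (if i = j then ?y $ i else 0)) - (\<Sum>i\<in>UNIV. (if f j = Some i then ?y $ i else 0))"
      unfolding sum_subtractf[symmetric] by (intro sum.cong) (auto simp: ua_def)
    also have "\<dots> = 0"
      using reach_rec[of f j] by (cases "f j") auto
    finally show ?thesis .
  qed
  then show "(\<chi> j. ua (f j) j) *v ?y = 0"
    by (simp add: vec_eq_iff matrix_vector_mult_def)
qed

definition ub :: "'n::finite \<Rightarrow> 'n option \<Rightarrow> 'n \<Rightarrow> real^'n" where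
  "ub one b j = (\<chi> i. if i = one then (if b = None then 1 else 0)
      else (if i = j \<and> b \<noteq> None then 1 else 0) - (if b = Some i then 1 else 0))"

lemma det_ub_same:
  fixes f :: "'n::finite \<Rightarrow> 'n option"
  assumes r: "{j. f j = None} = {r}"
  shows "det (\<chi> j. ub one (f j) j) = det (\<chi> j. ua (f j) j)"
proof -
  let ?A = "(\<chi> j. ua (f j) j) :: real^'n^'n"
  let ?B = "(\<chi> j. ub one (f j) j) :: real^'n^'n"
  let ?W = "(\<chi> j i. if i = one then (if f j = None then 1 else 0) else ?A$j$i) :: real^'n^'n"
  have fr: "f j = None \<longleftrightarrow> j = r" for j using r by auto
  have WB: "det ?W = det ?B"
  proof (cases "r = one")
    case True
    have "?W = ?B" using fr True by (auto simp: vec_eq_iff ua_def ub_def)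
    then show ?thesis by simp
  next
    case False
    let ?er = "(\<chi> i. if i = r then 1 else 0) :: real^'n"
    have W1: "?W = (\<chi> j. if j = r then row r ?B + ?er else row j ?B)"
      using fr False by (auto simp: vec_eq_iff ua_def ub_def row_def)
    have "det (\<chi> j. if j = r then ?er else row j ?B) = 0"
    proof (rule det_zero_column(1))
      show "column one (\<chi> j. if j = r then ?er else row j ?B) = 0"
        using fr False by (auto simp: vec_eq_iff ub_def row_def column_def)
    qed
    moreover have "(\<chi> j. if j = r then row r ?B else row j ?B) = ?B"
      by (auto simp: vec_eq_iff row_def)
    ultimately show ?thesis unfolding W1 det_row_add by simp
  qed
  have WA: "det ?W = det ?A"
  proof -
    let ?T = "transpose ?A"
    let ?x = "(\<Sum>i\<in>UNIV - {one}. row i ?T)"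
    have sp: "?x \<in> vec.span {row j ?T |j. j \<noteq> one}"
      by (intro vec.span_sum) (auto intro: vec.span_base)
    have rs: "(\<Sum>i\<in>UNIV. ?A$j$i) = (if f j = None then 1 else 0)" for j
    proof -
      have "(\<Sum>i\<in>UNIV. ?A$j$i) = (\<Sum>i\<in>UNIV. (if i = j then 1 else 0)) - (\<Sum>i\<in>UNIV. (if f j = Some i then 1 else 0))"
        unfolding sum_subtractf[symmetric] by (intro sum.cong) (auto simp: ua_def)
      then show ?thesis by (cases "f j") auto
    qed
    have "(\<chi> k. if k = one then row one ?T + ?x else row k ?T) = transpose ?W"
    proof (subst vec_eq_iff, intro allI, subst vec_eq_iff, intro allI)
      fix k i
      show "(\<chi> k. if k = one then row one ?T + ?x else row k ?T) $ k $ i = transpose ?W $ k $ i"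
      proof (cases "k = one")
        case True
        have "(row one ?T + ?x) $ i = ?A$i$one + (\<Sum>l\<in>UNIV - {one}. ?A$i$l)"
          by (simp add: row_def transpose_def sum_component del: vec_lambda_beta) (simp add: transpose_def)
        also have "\<dots> = (\<Sum>l\<in>UNIV. ?A$i$l)"
          by (simp add: sum.remove[of UNIV one])
        finally show ?thesis using True rs by (simp add: transpose_def)
      next
        case False
        then show ?thesis by (simp add: transpose_def row_def)
      qed
    qed
    then have "det (transpose ?W) = det ?T"
      using det_row_span[OF sp] by simp
    then show ?thesis by simp
  qed
  show ?thesis using WA WB by simp
qed

lemma det_ub:
  fixes f :: "'n::finite \<Rightarrow> 'n option"
  shows "det (\<chi> j. ub one (f j) j) = (if (\<forall>j. reach f j) \<and> card {j. f j = None} = 1 then 1 else 0)"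
proof (cases "card {j. f j = None} = 1")
  case True
  then obtain r where r: "{j. f j = None} = {r}" by (meson card_1_singletonE)
  show ?thesis unfolding det_ub_same[OF r] using True det_ua_reach det_ua_nreach by auto
next
  case False
  show ?thesis
  proof (cases "{j. f j = None} = {}")
    case True
    have "column one (\<chi> j. ub one (f j) j) = 0"
      using True by (auto simp: vec_eq_iff ub_def column_def)
    then show ?thesis using False det_zero_column(1) by simp
  next
    case ne: False
    then obtain j1 where j1: "f j1 = None" by auto
    have "\<exists>j2. j2 \<noteq> j1 \<and> f j2 = None"
    proof (rule ccontr)
      assume "\<not> ?thesis"
      then have "{j. f j = None} = {j1}" using j1 by auto
      then show False using False by simp
    qed
    then obtain j2 where j2: "j2 \<noteq> j1" "f j2 = None" by auto
    have "row j1 (\<chi> j. ub one (f j) j) = row j2 (\<chi> j. ub one (f j) j)"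
      using j1 j2 by (auto simp: vec_eq_iff ub_def row_def)
    then have "det (\<chi> j. ub one (f j) j) = 0" using det_identical_rows j2(1) by metis
    then show ?thesis using False by simp
  qed
qed

definition uvec :: "lap_case \<Rightarrow> 'n::finite \<Rightarrow> 'n option \<Rightarrow> 'n \<Rightarrow> real^'n" where
  "uvec c one a j = (case c of AllTrees \<Rightarrow> ua a j | SingleRooted \<Rightarrow> ub one a j)"

definition Fset :: "lap_case \<Rightarrow> ('n::finite \<Rightarrow> 'n option) set" where
  "Fset c = {f. (\<forall>j. reach f j) \<and> (c = SingleRooted \<longrightarrow> card {j. f j = None} = 1)}"

definition Vm :: "lap_case \<Rightarrow> 'n::finite \<Rightarrow> ('n option \<Rightarrow> 'n \<Rightarrow> real) \<Rightarrow> real^'n^'n" where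
  "Vm c one cf = (\<chi> j. \<Sum>a\<in>UNIV. cf a j *s uvec c one a j)"

lemma det_uvec: "det (\<chi> j. uvec c one (f j) j) = (if f \<in> Fset c then 1 else 0)"
  by (cases c) (simp_all add: uvec_def Fset_def det_ub det_ua_reach det_ua_nreach)

lemma det_multilin_lemma:
  fixes a :: "'n::finite \<Rightarrow> 'b::finite \<Rightarrow> 'a::comm_ring_1^'n"
  assumes fT: "finite T"
  shows "det ((\<chi> i. if i \<in> T then sum (a i) UNIV else c i):: 'a^'n^'n) =
    sum (\<lambda>f. det((\<chi> i. if i \<in> T then a i (f i) else c i)::'a^'n^'n))
      {f. \<forall>i. i \<notin> T \<longrightarrow> f i = d}"
  using fT
proof (induct T arbitrary: c set: finite)
  case empty
  have th0: "\<And>x y. (\<chi> i. if i \<in> {} then x i else y i) = (\<chi> i. y i)"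
    by vector
  have eq: "{f. \<forall>i. i \<notin> {} \<longrightarrow> f i = d} = {(\<lambda>_. d)}" by auto
  show ?case unfolding th0 eq by simp
next
  case (insert z T c)
  let ?F = "\<lambda>T. {f. \<forall>i. i \<notin> T \<longrightarrow> f i = d}"
  let ?h = "\<lambda>(y,g). g(z := y)"
  let ?k = "\<lambda>h. (h(z),(\<lambda>i. if i = z then d else h i))"
  have thif: "\<And>a b c d. (if a \<or> b then c else d) = (if a then c else if b then c else d)"
    by simp
  have thif2: "\<And>a b c d e. (if a then b else if c then d else e) =
     (if c then (if a then b else d) else (if a then b else e))"
    by simp
  from \<open>z \<notin> T\<close> have nz: "\<And>i. i \<in> T \<Longrightarrow> i \<noteq> z"
    by auto
  have "det (\<chi> i. if i \<in> insert z T then sum (a i) UNIV else c i) =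
    det (\<chi> i. if i = z then sum (a i) UNIV else if i \<in> T then sum (a i) UNIV else c i)"
    unfolding insert_iff thif ..
  also have "\<dots> = (\<Sum>j\<in>UNIV. det (\<chi> i. if i \<in> T then sum (a i) UNIV else if i = z then a i j else c i))"
    unfolding det_linear_row_sum[OF finite]
    by (subst thif2) (simp add: nz cong: if_cong)
  finally have tha:
    "det (\<chi> i. if i \<in> insert z T then sum (a i) UNIV else c i) =
     (\<Sum>(j, f)\<in>UNIV \<times> ?F T. det (\<chi> i. if i \<in> T then a i (f i)
                                else if i = z then a i j
                                else c i))"
    unfolding insert.hyps unfolding sum.cartesian_product by blast
  show ?case unfolding tha
    using \<open>z \<notin> T\<close>
    by (intro sum.reindex_bij_witness[where i="?k" and j="?h"])
       (auto intro!: cong[OF refl[of det]] simp: vec_eq_iff)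
qed

lemma det_multilin:
  fixes a :: "'n::finite \<Rightarrow> 'b::finite \<Rightarrow> 'a::comm_ring_1^'n"
  shows "det (\<chi> i. sum (a i) UNIV) = (\<Sum>f\<in>UNIV. det (\<chi> i. a i (f i)))"
  using det_multilin_lemma[of UNIV a c undefined] by simp

lemma MT: "det (Vm c one cf) = (\<Sum>f\<in>Fset c. \<Prod>j\<in>UNIV. cf (f j) j)"
proof -
  have "det (Vm c one cf) = (\<Sum>f\<in>UNIV. det (\<chi> i. cf (f i) i *s uvec c one (f i) i))"
    unfolding Vm_def using det_multilin[of "\<lambda>i b. cf b i *s uvec c one b i"] by simp
  also have "\<dots> = (\<Sum>f\<in>UNIV. (\<Prod>j\<in>UNIV. cf (f j) j) * (if f \<in> Fset c then 1 else 0))"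
    by (simp add: det_rows_mul det_uvec)
  also have "\<dots> = (\<Sum>f\<in>Fset c. \<Prod>j\<in>UNIV. cf (f j) j)"
  proof -
    have "(\<Sum>f\<in>UNIV. (\<Prod>j\<in>UNIV. cf (f j) j) * (if f \<in> Fset c then 1 else 0))
       = (\<Sum>f\<in>UNIV. if f \<in> Fset c then (\<Prod>j\<in>UNIV. cf (f j) j) else 0)"
      by (intro sum.cong) auto
    also have "\<dots> = (\<Sum>f\<in>UNIV \<inter> Fset c. \<Prod>j\<in>UNIV. cf (f j) j)"
      by (rule sum.inter_restrict[symmetric]) simp
    finally show ?thesis by simp
  qed
  finally show ?thesis .
qed

lemma sum_option: "(\<Sum>a\<in>UNIV. g a) = g None + (\<Sum>j\<in>UNIV. g (Some j))"
  for g :: "'n::finite option \<Rightarrow> 'b::comm_monoid_add"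
  by (simp add: UNIV_option_conv sum.reindex)

lemma lap_Vm: "lap c one w = transpose (Vm c one (\<lambda>a j. w a (Some j)))"
proof (subst vec_eq_iff, intro allI, subst vec_eq_iff, intro allI)
  fix i j
  have "transpose (Vm c one (\<lambda>a j. w a (Some j))) $ i $ j = (\<Sum>a\<in>UNIV. w a (Some j) * uvec c one a j $ i)"
    by (simp add: transpose_def Vm_def sum_component)
  also have "\<dots> = lap c one w $ i $ j"
  proof (cases c)
    case AllTrees
    have "(\<Sum>a\<in>UNIV. w a (Some j) * uvec c one a j $ i) = 
       (\<Sum>a\<in>UNIV. if i = j then w a (Some j) else 0) - (\<Sum>a\<in>UNIV. if a = Some i then w a (Some j) else 0)"
      unfolding sum_subtractf[symmetric] using AllTrees by (intro sum.cong) (auto simp: uvec_def ua_def)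
    also have "\<dots> = lap c one w $ i $ j"
      using AllTrees by (simp add: lap_def laplacian_def sum_diff1)
    finally show ?thesis .
  next
    case SingleRooted
    have "(\<Sum>a\<in>UNIV. w a (Some j) * uvec c one a j $ i) = 
       (if i = one then w None (Some j) else 
       (\<Sum>a\<in>UNIV. if i = j \<and> a \<noteq> None then w a (Some j) else 0) - (\<Sum>a\<in>UNIV. if a = Some i then w a (Some j) else 0))"
    proof (cases "i = one")
      case True
      then show ?thesis using SingleRooted by (simp add: uvec_def ub_def sum_option)
    next
      case False
      then show ?thesis
        unfolding sum_subtractf[symmetric] using SingleRooted by (auto simp: uvec_def ub_def intro!: sum.cong)
    qed
    also have "\<dots> = lap c one w $ i $ j"
    proof -
      have "(\<Sum>a\<in>UNIV - {None, Some j}. w a (Some j)) = (\<Sum>a\<in>UNIV. w a (Some j)) - (\<Sum>a\<in>{None, Some j}. w a (Some j))"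
        by (rule sum_diff) auto
      also have "\<dots> = (\<Sum>a\<in>UNIV. w a (Some j)) - w None (Some j) - w (Some j) (Some j)" by simp
      finally have e1: "(\<Sum>a\<in>UNIV - {None, Some j}. w a (Some j)) = (\<Sum>a\<in>UNIV. w a (Some j)) - w None (Some j) - w (Some j) (Some j)" .
      have e2: "(\<Sum>a\<in>UNIV. if i = j \<and> a \<noteq> None then w a (Some j) else 0) = (if i = j then (\<Sum>a\<in>UNIV. w a (Some j)) - w None (Some j) else 0)"
        by (simp add: sum_option)
      show ?thesis using SingleRooted e1 e2 by (simp add: lap_def root_laplacian_def root_def)
    qed
    finally show ?thesis .
  qed
  finally show "lap c one w $ i $ j = transpose (Vm c one (\<lambda>a j. w a (Some j))) $ i $ j" by simp
qed

definition Gf :: "('n \<Rightarrow> 'n option) \<Rightarrow> ('n option \<times> 'n option) set" where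
  "Gf f = range (\<lambda>j. (f j, Some j))"

lemma qstep_None_mono: "(qstep f ^^ n) x = None \<Longrightarrow> n \<le> m \<Longrightarrow> (qstep f ^^ m) x = None"
proof -
  assume a: "(qstep f ^^ n) x = None" "n \<le> m"
  then obtain k where "m = k + n" by (metis add.commute le_add_diff_inverse)
  then show ?thesis using a by (simp add: funpow_add)
qed

lemma funpow_period: "(g ^^ k) x = x \<Longrightarrow> (g ^^ (m * k)) x = x"
  by (induction m) (simp_all add: funpow_add)

lemma Gf_trancl: "(a, b) \<in> (Gf f)\<^sup>+ \<Longrightarrow> \<exists>k>0. (qstep f ^^ k) b = a \<and> b \<noteq> None"
proof (induction rule: trancl_induct)
  case (base y)
  then obtain j where "a = f j" "y = Some j" by (auto simp: Gf_def)
  then have "(qstep f ^^ 1) y = a" by (simp add: qstep_def)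
  then show ?case using \<open>y = Some j\<close> by blast
next
  case (step y z)
  then obtain j where j: "y = f j" "z = Some j" by (auto simp: Gf_def)
  from step.IH obtain k where k: "k > 0" "(qstep f ^^ k) y = a" by blast
  have "(qstep f ^^ Suc k) z = (qstep f ^^ k) (qstep f z)"
    by (simp only: funpow_Suc_right comp_def)
  also have "\<dots> = a" using j k by (simp add: qstep_def)
  finally show ?case using j by blast
qed

lemma Gf_step: "(qstep f ^^ k) x \<noteq> None \<Longrightarrow> ((qstep f ^^ Suc k) x, (qstep f ^^ k) x) \<in> Gf f"
  by (cases "(qstep f ^^ k) x") (auto simp: Gf_def qstep_def)

lemma Gf_chain:
  assumes "\<forall>k. (qstep f ^^ k) x \<noteq> None"
  shows "((qstep f ^^ (a + Suc m)) x, (qstep f ^^ a) x) \<in> (Gf f)\<^sup>+"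
proof (induction m)
  case 0 then show ?case using Gf_step[where f=f and k=a and x=x] assms by simp
next
  case (Suc m)
  have "((qstep f ^^ Suc (a + Suc m)) x, (qstep f ^^ (a + Suc m)) x) \<in> Gf f"
    using Gf_step[where f=f and k="a + Suc m" and x=x] assms by blast
  then have "((qstep f ^^ Suc (a + Suc m)) x, (qstep f ^^ a) x) \<in> (Gf f)\<^sup>+"
    using Suc.IH by (rule trancl_into_trancl2)
  then show ?case by simp
qed

lemma acyc_iff: "acyclic (Gf (f :: 'n::finite \<Rightarrow> 'n option)) \<longleftrightarrow> (\<forall>j. reach f j)"
proof
  assume ac: "acyclic (Gf f)"
  show "\<forall>j. reach f j"
  proof (rule ccontr)
    assume "\<not> (\<forall>j. reach f j)"
    then obtain j where "\<not> reach f j" by blast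
    then have nn: "\<forall>k. (qstep f ^^ k) (Some j) \<noteq> None" unfolding reach_def by simp
    let ?h = "\<lambda>k. (qstep f ^^ k) (Some j)"
    have "\<not> inj ?h"
    proof
      assume ih: "inj ?h"
      have "finite (range ?h)" by (rule finite_subset[OF subset_UNIV]) simp
      from finite_imageD[OF this ih] show False by simp
    qed
    then obtain a b where ab: "a \<noteq> b" "?h a = ?h b" unfolding inj_def by metis
    have "\<exists>a b. a < b \<and> ?h a = ?h b"
    proof (cases "a < b")
      case True then show ?thesis using ab(2) by (intro exI conjI)
    next
      case False then have "b < a" using ab(1) by simp
      then show ?thesis using ab(2)[symmetric] by (intro exI conjI)
    qed
    then obtain a b where ab: "a < b" "?h a = ?h b" by (elim exE conjE)
    from less_imp_Suc_add[OF ab(1)] obtain m where "b = Suc (a + m)" by (elim exE)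
    then have m: "b = a + Suc m" by simp
    have c1: "(?h (a + Suc m), ?h a) \<in> (Gf f)\<^sup>+" by (rule Gf_chain[OF nn])
    have "?h (a + Suc m) = ?h b" using m by (simp only:)
    then have e1: "?h (a + Suc m) = ?h a" using ab(2) by (simp only:)
    have "(?h a, ?h a) \<in> (Gf f)\<^sup>+" using c1 unfolding e1 .
    then show False using ac unfolding acyclic_def by metis
  qed
next
  assume R: "\<forall>j. reach f j"
  show "acyclic (Gf f)"
  unfolding acyclic_def
  proof (intro allI notI)
    fix x assume xx: "(x, x) \<in> (Gf f)\<^sup>+"
    obtain k where k: "k > 0" "(qstep f ^^ k) x = x" "x \<noteq> None" using Gf_trancl[OF xx] by metis
    then obtain j where x: "x = Some j" by auto
    from R obtain n where n: "(qstep f ^^ n) x = None" using x unfolding reach_def by metis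
    have "(qstep f ^^ (n * k)) x = x" by (rule funpow_period[OF k(2)])
    moreover have "n \<le> n * k" using k by simp
    have "(qstep f ^^ (n * k)) x = None" using qstep_None_mono[OF n \<open>n \<le> n * k\<close>] .
    then show False using \<open>(qstep f ^^ (n * k)) x = x\<close> k(3) by simp
  qed
qed

lemma reach_root_edge:
  assumes "\<forall>j. reach (f :: 'n::finite \<Rightarrow> 'n option) j"
  shows "\<exists>j. f j = None"
proof (rule ccontr)
  assume "\<not> ?thesis"
  then have "(qstep f ^^ k) (Some j) \<noteq> None" for k j
  proof (induction k arbitrary: j)
    case 0 then show ?case by simp
  next
    case (Suc k)
    then obtain b where fb: "f j = Some b" by auto
    have e: "(qstep f ^^ Suc k) (Some j) = (qstep f ^^ k) (qstep f (Some j))"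
      by (simp only: funpow_Suc_right comp_def)
    have "qstep f (Some j) = Some b" using fb by (simp add: qstep_def)
    have "(qstep f ^^ k) (Some b) \<noteq> None" using Suc.IH Suc.prems by metis
    then show ?case using e \<open>qstep f (Some j) = Some b\<close> by (simp only: not_False_eq_True)
  qed
  moreover obtain k where "(qstep f ^^ k) (Some undefined) = None" using assms unfolding reach_def by metis
  ultimately show False by metis
qed

lemma inj_edge: "inj (\<lambda>j. (f j, Some j))" by (auto simp: inj_def)

lemma card_Gf: "card (Gf (f :: 'n::finite \<Rightarrow> 'n option)) = CARD('n)"
  unfolding Gf_def by (simp add: card_image inj_edge)

lemma Gf_in: "(i, Some j) \<in> Gf f \<longleftrightarrow> i = f j" by (auto simp: Gf_def)

lemma Gf_root: "{b. (root, b) \<in> Gf f} = Some ` {j. f j = None}"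
  by (auto simp: Gf_def root_def image_iff)

definition FE :: "lap_case \<Rightarrow> ('n option \<times> 'n option) set \<Rightarrow> ('n::finite \<Rightarrow> 'n option) set" where
  "FE c E = {f \<in> Fset c. \<forall>j. (f j, Some j) \<in> E}"

lemma tree_bij:
  fixes E :: "('n::finite option \<times> 'n option) set"
  assumes E: "\<forall>(i,j)\<in>E. j \<noteq> root"
  shows "bij_betw Gf (FE c E) (trees c E)"
proof (rule bij_betw_imageI)
  show "inj_on Gf (FE c E)"
  proof (rule inj_onI)
    fix f g assume "Gf f = Gf g"
    then have "(f j, Some j) \<in> Gf g" for j by (auto simp: Gf_def)
    then show "f = g" by (auto simp: Gf_in fun_eq_iff)
  qed
  show "Gf ` FE c E = trees c E"
  proof
    show "Gf ` FE c E \<subseteq> trees c E"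
    proof
      fix d assume "d \<in> Gf ` FE c E"
      then obtain f where f: "f \<in> FE c E" "d = Gf f" by blast
      have R: "\<forall>j. reach f j" using f by (auto simp: FE_def Fset_def)
      have "{i. (i, Some j) \<in> d} = {f j}" for j using f by (auto simp: Gf_in)
      moreover have "\<exists>b. (root, b) \<in> d"
      proof -
        obtain j where "f j = None" using reach_root_edge[OF R] by blast
        then have "(root, Some j) \<in> d" using f(2) by (simp add: Gf_in root_def)
        then show ?thesis by blast
      qed
      moreover have "d \<subseteq> E" using f by (auto simp: Gf_def FE_def)
      moreover have "c = SingleRooted \<longrightarrow> single_rooted d"
        using f by (auto simp: single_rooted_def Gf_root card_image FE_def Fset_def)
      ultimately show "d \<in> trees c E"
        using f R by (simp add: trees_def is_tree_def card_Gf acyc_iff)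
    qed
    show "trees c E \<subseteq> Gf ` FE c E"
    proof
      fix d assume d: "d \<in> trees c E"
      then have t: "is_tree E d" by (simp add: trees_def)
      define f where "f j = (THE i. (i, Some j) \<in> d)" for j
      have fj: "(i, Some j) \<in> d \<longleftrightarrow> i = f j" for i j
      proof -
        have "card {i. (i, Some j) \<in> d} = 1" using t by (simp add: is_tree_def)
        then obtain x where x: "{i. (i, Some j) \<in> d} = {x}" by (meson card_1_singletonE)
        then have "f j = x" unfolding f_def by auto
        then show ?thesis using x by auto
      qed
      have dG: "d = Gf f"
      proof
        show "d \<subseteq> Gf f"
        proof
          fix e assume "e \<in> d"
          then obtain a b where e: "e = (a, b)" "(a, b) \<in> d" by (cases e) auto
          then have "b \<noteq> root" using t E by (auto simp: is_tree_def)
          then obtain j where "b = Some j" by (auto simp: root_def)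
          then show "e \<in> Gf f" using e fj by (auto simp: Gf_def)
        qed
        show "Gf f \<subseteq> d" using fj by (auto simp: Gf_def)
      qed
      have "\<forall>j. reach f j" using t dG acyc_iff by (auto simp: is_tree_def)
      moreover have "\<forall>j. (f j, Some j) \<in> E" using t fj by (auto simp: is_tree_def)
      moreover have "c = SingleRooted \<longrightarrow> card {j. f j = None} = 1"
        using d dG by (auto simp: trees_def single_rooted_def Gf_root card_image)
      ultimately have "f \<in> FE c E" by (simp add: FE_def Fset_def)
      then show "d \<in> Gf ` FE c E" using dG by blast
    qed
  qed
qed

lemma tree_weight_Gf: "tree_weight w (Gf f) = (\<Prod>j\<in>UNIV. w (f j) (Some j))"
  unfolding tree_weight_def Gf_def by (simp add: prod.reindex inj_edge)

lemma tree_sum_Gf: "tree_sum r (Gf f) = (\<Sum>j\<in>UNIV. r (f j) (Some j))"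
  unfolding tree_sum_def Gf_def by (simp add: sum.reindex inj_edge)

lemma deriv_affine:
  assumes "\<And>x. g x = \<alpha> + \<beta> * x"
  shows "deriv g y = \<beta>"
proof -
  have ge: "g = (\<lambda>x. \<alpha> + \<beta> * x)" using assms by (simp add: fun_eq_iff)
  have "((\<lambda>x. \<alpha> + \<beta> * x) has_field_derivative \<beta>) (at y)"
    by (auto intro!: derivative_eq_intros)
  then show ?thesis unfolding ge by (rule DERIV_imp_deriv)
qed

lemma lap_entry: "lap c one w $ k' $ l' = (\<Sum>a\<in>UNIV. w a (Some l') * uvec c one a l' $ k')"
  by (simp add: lap_Vm transpose_def Vm_def sum_component)

lemma lap_deriv_eq:
  "lap_deriv c one w k (Some j) k' l' = (if l' = j then uvec c one k j $ k' else 0)"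
proof -
  let ?\<beta> = "(if l' = j then uvec c one k j $ k' else 0)"
  let ?\<alpha> = "(\<Sum>a\<in>UNIV. w a (Some l') * uvec c one a l' $ k') - ?\<beta> * w k (Some j)"
  have "lap c one (upd_w w k (Some j) x) $ k' $ l' = ?\<alpha> + ?\<beta> * x" for x
  proof -
    have "lap c one (upd_w w k (Some j) x) $ k' $ l' =
      (\<Sum>a\<in>UNIV. w a (Some l') * uvec c one a l' $ k' +
         (if a = k then (if l' = j then (x - w k (Some j)) * uvec c one k j $ k' else 0) else 0))"
      unfolding lap_entry by (intro sum.cong) (auto simp: upd_w_def algebra_simps)
    also have "\<dots> = (\<Sum>a\<in>UNIV. w a (Some l') * uvec c one a l' $ k') +
         (if l' = j then (x - w k (Some j)) * uvec c one k j $ k' else 0)"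
      by (simp add: sum.distrib)
    finally show ?thesis by (simp add: algebra_simps)
  qed
  then show ?thesis unfolding lap_deriv_def by (rule deriv_affine)
qed

lemma detP2:
  fixes y z :: "real^'n::finite"
  assumes jj: "j \<noteq> j'"
  shows "det (\<chi> i c. if c = j then y$i else if c = j' then z$i else (if i = c then 1 else 0))
         = y$j * z$j' - y$j' * z$j"
proof -
  let ?M = "(\<chi> i c. if c = j then y$i else if c = j' then z$i else (if i = c then 1 else 0)) :: real^'n^'n"
  let ?T = "transpose ?M"
  have T: "?T $ r $ c = (if r = j then y$c else if r = j' then z$c else (if r = c then 1 else 0))" for r c
    by (simp add: transpose_def)
  let ?P = "{p. p permutes (UNIV::'n set)}"
  let ?g = "\<lambda>p. of_int (sign p) * (\<Prod>i\<in>UNIV. ?T$i$p i)"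
  let ?s = "Transposition.transpose j j'"
  have z: "?g p = 0" if p: "p \<in> ?P - {id, ?s}" for p
  proof -
    have pp: "p permutes UNIV" using p by auto
    have "\<exists>i. i \<noteq> j \<and> i \<noteq> j' \<and> p i \<noteq> i"
    proof (rule ccontr)
      assume "\<not> ?thesis"
      then have fx: "\<And>i. i \<noteq> j \<Longrightarrow> i \<noteq> j' \<Longrightarrow> p i = i" by blast
      have ij: "inj p" using pp permutes_inj by blast
      have pj: "p j = j \<or> p j = j'"
      proof (rule ccontr)
        assume nq: "\<not> (p j = j \<or> p j = j')"
        then have "p (p j) = p j" using fx by blast
        then have "p j = j" using ij by (simp add: inj_eq)
        then show False using nq by simp
      qed
      have pj': "p j' = j \<or> p j' = j'"
      proof (rule ccontr)
        assume nq: "\<not> (p j' = j \<or> p j' = j')"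
        then have "p (p j') = p j'" using fx by blast
        then have "p j' = j'" using ij by (simp add: inj_eq)
        then show False using nq by simp
      qed
      have "p j \<noteq> p j'" using ij jj by (simp add: inj_eq)
      then have "p = id \<or> p = ?s"
      proof (cases "p j = j")
        case True
        then have "p j' = j'" using pj' \<open>p j \<noteq> p j'\<close> by auto
        have "p x = id x" for x
          using True \<open>p j' = j'\<close> fx[of x] by (cases "x = j"; cases "x = j'") auto
        then have "p = id" by (rule ext)
        then show ?thesis by simp
      next
        case False
        then have "p j = j'" "p j' = j" using pj pj' \<open>p j \<noteq> p j'\<close> by auto
        have "p x = ?s x" for x
          using \<open>p j = j'\<close> \<open>p j' = j\<close> fx[of x] by (cases "x = j"; cases "x = j'") (auto simp: transpose_def)
        then have "p = ?s" by (rule ext)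
        then show ?thesis by simp
      qed
      then show False using p by auto
    qed
    then obtain i where i: "i \<noteq> j" "i \<noteq> j'" "p i \<noteq> i" by blast
    then have "?T$i$p i = 0" using T by simp
    then have "(\<Prod>i\<in>UNIV. ?T$i$p i) = 0" by (meson UNIV_I finite prod_zero)
    then show ?thesis by simp
  qed
  have prod2: "(\<Prod>i\<in>UNIV. h i) = h j * h j' * (\<Prod>i\<in>UNIV - {j, j'}. h i)" for h :: "'n \<Rightarrow> real"
  proof -
    have "(\<Prod>i\<in>UNIV. h i) = h j * (\<Prod>i\<in>UNIV - {j}. h i)" by (simp add: prod.remove)
    also have "(\<Prod>i\<in>UNIV - {j}. h i) = h j' * (\<Prod>i\<in>UNIV - {j} - {j'}. h i)"
      using jj by (intro prod.remove) auto
    finally show ?thesis by (simp add: Diff_insert2[symmetric] insert_commute mult.assoc)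
  qed
  have gid: "?g id = y$j * z$j'"
  proof -
    have "(\<Prod>i\<in>UNIV - {j, j'}. ?T$i$id i) = 1" using T by (intro prod.neutral) auto
    moreover have "(\<Prod>i\<in>UNIV. ?T$i$id i) = ?T$j$id j * ?T$j'$id j' * (\<Prod>i\<in>UNIV - {j, j'}. ?T$i$id i)"
      by (rule prod2)
    moreover have "?T$j$id j = y$j" "?T$j'$id j' = z$j'" using T jj by auto
    ultimately show ?thesis by simp
  qed
  have gs: "?g ?s = - (y$j' * z$j)"
  proof -
    have "(\<Prod>i\<in>UNIV - {j, j'}. ?T$i$?s i) = 1" using T by (intro prod.neutral) (auto simp: transpose_def)
    moreover have "(\<Prod>i\<in>UNIV. ?T$i$?s i) = ?T$j$?s j * ?T$j'$?s j' * (\<Prod>i\<in>UNIV - {j, j'}. ?T$i$?s i)"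
      by (rule prod2)
    moreover have "?T$j$?s j = y$j'" "?T$j'$?s j' = z$j" using T jj by (auto simp: transpose_def)
    moreover have "of_int (sign ?s) = (-1::real)" using jj by (simp add: sign_swap_id)
    ultimately show ?thesis by (simp add: mult.commute)
  qed
  have "det ?M = det ?T" by simp
  also have "\<dots> = sum ?g ?P" unfolding det_def by simp
  also have "\<dots> = sum ?g {id, ?s}"
    using z by (intro sum.mono_neutral_right) (auto simp: permutes_id permutes_swap_id)
  also have "\<dots> = ?g id + ?g ?s"
  proof -
    have "id \<noteq> ?s" using jj by (metis id_apply transpose_apply_first)
    then show ?thesis by simp
  qed
  finally show ?thesis using gid gs by simp
qed

definition upd1 :: "('a \<Rightarrow> 'n \<Rightarrow> real) \<Rightarrow> 'n \<Rightarrow> 'a \<Rightarrow> 'a \<Rightarrow> 'n \<Rightarrow> real" where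
  "upd1 cf j a = (\<lambda>b i. if i = j then (if b = a then 1 else 0) else cf b i)"

lemma inv_props:
  fixes L :: "real^'n::finite^'n"
  assumes "det L \<noteq> 0"
  shows "L ** matrix_inv L = mat 1" "matrix_inv L ** L = mat 1"
proof -
  have "invertible L" using assms invertible_det_nz by blast
  then have "\<exists>A'. L ** A' = mat 1 \<and> A' ** L = mat 1" unfolding invertible_def .
  then have "L ** matrix_inv L = mat 1 \<and> matrix_inv L ** L = mat 1"
    unfolding matrix_inv_def by (rule someI_ex)
  then show "L ** matrix_inv L = mat 1" "matrix_inv L ** L = mat 1" by auto
qed

lemma inv_transpose:
  fixes L :: "real^'n::finite^'n"
  assumes "det L \<noteq> 0"
  shows "matrix_inv (transpose L) = transpose (matrix_inv L)"
proof -
  have d: "det (transpose L) \<noteq> 0" using assms by simp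
  note a = inv_props[OF assms] and b = inv_props[OF d]
  have t1: "transpose (matrix_inv L) ** transpose L = mat 1"
    using a(1) by (metis matrix_transpose_mul transpose_mat)
  have "matrix_inv (transpose L) = (transpose (matrix_inv L) ** transpose L) ** matrix_inv (transpose L)"
    using t1 by simp
  also have "\<dots> = transpose (matrix_inv L)"
    using b(1) by (metis matrix_mul_assoc matrix_mul_rid)
  finally show ?thesis .
qed

lemma Vm_upd1: "Vm c one (upd1 cf j a) = (\<chi> i. if i = j then uvec c one a j else Vm c one cf $ i)"
proof -
  have "(\<Sum>b\<in>UNIV. (if b = a then 1 else 0) *s uvec c one b j) = uvec c one a j"
    by (simp add: if_distrib[of "\<lambda>t. t *s _"] cong: if_cong)
  then show ?thesis by (simp add: Vm_def upd1_def vec_eq_iff)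
qed

lemma G1:
  fixes L :: "real^'n::finite^'n"
  assumes L: "L = transpose (Vm c one cf)" and d: "det L \<noteq> 0"
  shows "det (Vm c one (upd1 cf j a)) = (matrix_inv L *v uvec c one a j) $ j * det L"
proof -
  have VL: "Vm c one cf = transpose L" using L by simp
  let ?x = "matrix_inv L *v uvec c one a j"
  have Lx: "L *v ?x = uvec c one a j"
    using inv_props(1)[OF d] by (simp add: matrix_vector_mul_assoc)
  have "transpose (Vm c one (upd1 cf j a)) = (\<chi> i k. if k = j then (L *v ?x)$i else L$i$k)"
    unfolding Lx Vm_upd1 VL by (simp add: vec_eq_iff transpose_def)
  then have "det (Vm c one (upd1 cf j a)) = det (\<chi> i k. if k = j then (L *v ?x)$i else L$i$k)"
    by (metis det_transpose)
  also have "\<dots> = ?x $ j * det L" by (rule cramer_lemma)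
  finally show ?thesis .
qed

lemma G2:
  fixes L :: "real^'n::finite^'n"
  assumes L: "L = transpose (Vm c one cf)" and d: "det L \<noteq> 0" and jj: "j \<noteq> j'"
  shows "det (Vm c one (upd1 (upd1 cf j a) j' a')) =
     det L * ((matrix_inv L *v uvec c one a j) $ j * (matrix_inv L *v uvec c one a' j') $ j'
            - (matrix_inv L *v uvec c one a j) $ j' * (matrix_inv L *v uvec c one a' j') $ j)"
proof -
  have VL: "Vm c one cf = transpose L" using L by simp
  let ?y = "matrix_inv L *v uvec c one a j"
  let ?z = "matrix_inv L *v uvec c one a' j'"
  have Ly: "L *v ?y = uvec c one a j"
    using inv_props(1)[OF d] by (simp add: matrix_vector_mul_assoc)
  have Lz: "L *v ?z = uvec c one a' j'"
    using inv_props(1)[OF d] by (simp add: matrix_vector_mul_assoc)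
  let ?P = "(\<chi> i k. if k = j then ?y$i else if k = j' then ?z$i else (if i = k then 1 else 0)) :: real^'n^'n"
  have "transpose (Vm c one (upd1 (upd1 cf j a) j' a')) = L ** ?P"
  proof (subst vec_eq_iff, intro allI, subst vec_eq_iff, intro allI)
    fix i k
    have "(L ** ?P) $ i $ k = (\<Sum>m\<in>UNIV. L$i$m * ?P$m$k)" by (simp add: matrix_matrix_mult_def)
    also have "\<dots> = (if k = j then (L *v ?y)$i else if k = j' then (L *v ?z)$i else L$i$k)"
      by (auto simp: matrix_vector_mult_def if_distrib[of "\<lambda>t. _ * t"] cong: if_cong)
    also have "\<dots> = transpose (Vm c one (upd1 (upd1 cf j a) j' a')) $ i $ k"
      unfolding Ly Lz Vm_upd1 VL using jj by (simp add: transpose_def)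
    finally show "transpose (Vm c one (upd1 (upd1 cf j a) j' a')) $ i $ k = (L ** ?P) $ i $ k" by simp
  qed
  then have "det (Vm c one (upd1 (upd1 cf j a) j' a')) = det (L ** ?P)" by (metis det_transpose)
  also have "\<dots> = det L * det ?P" by (rule det_mul)
  also have "det ?P = ?y$j * ?z$j' - ?y$j' * ?z$j" using detP2[OF jj] .
  finally show ?thesis .
qed

lemma prod_remove1: "(\<Prod>i\<in>UNIV. h i) = h j * (\<Prod>i\<in>UNIV - {j}. h i)"
  for h :: "'n::finite \<Rightarrow> real"
  by (simp add: prod.remove)

lemma prod_upd1:
  "cf a j * (\<Prod>i\<in>UNIV. upd1 cf j a (f i) i) = (if f j = a then (\<Prod>i\<in>UNIV. cf (f i) i) else 0)"
  for cf :: "'a \<Rightarrow> 'n::finite \<Rightarrow> real"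
proof -
  have "(\<Prod>i\<in>UNIV - {j}. upd1 cf j a (f i) i) = (\<Prod>i\<in>UNIV - {j}. cf (f i) i)"
    by (intro prod.cong) (auto simp: upd1_def)
  then show ?thesis
    by (simp add: prod_remove1[of _ j] upd1_def)
qed

lemma prod_upd2:
  fixes cf :: "'a \<Rightarrow> 'n::finite \<Rightarrow> real"
  assumes jj: "j \<noteq> j'"
  shows "cf a j * cf a' j' * (\<Prod>i\<in>UNIV. upd1 (upd1 cf j a) j' a' (f i) i)
     = (if f j = a \<and> f j' = a' then (\<Prod>i\<in>UNIV. cf (f i) i) else 0)"
proof -
  have e: "upd1 cf j a a' j' = cf a' j'" using jj by (simp add: upd1_def)
  have "cf a' j' * (\<Prod>i\<in>UNIV. upd1 (upd1 cf j a) j' a' (f i) i) =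
     (if f j' = a' then (\<Prod>i\<in>UNIV. upd1 cf j a (f i) i) else 0)"
    using prod_upd1[of "upd1 cf j a" a' j' f] unfolding e .
  then have "cf a j * cf a' j' * (\<Prod>i\<in>UNIV. upd1 (upd1 cf j a) j' a' (f i) i) =
     (if f j' = a' then cf a j * (\<Prod>i\<in>UNIV. upd1 cf j a (f i) i) else 0)"
    by (simp add: mult.assoc)
  also have "\<dots> = (if f j = a \<and> f j' = a' then (\<Prod>i\<in>UNIV. cf (f i) i) else 0)"
    by (simp add: prod_upd1)
  finally show ?thesis .
qed

definition N1 :: "lap_case \<Rightarrow> ('n::finite option \<Rightarrow> 'n \<Rightarrow> real) \<Rightarrow> 'n option \<Rightarrow> 'n \<Rightarrow> real" where
  "N1 c cf a j = (\<Sum>f\<in>Fset c. if f j = a then (\<Prod>i\<in>UNIV. cf (f i) i) else 0)"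

definition N2 :: "lap_case \<Rightarrow> ('n::finite option \<Rightarrow> 'n \<Rightarrow> real) \<Rightarrow> 'n option \<Rightarrow> 'n \<Rightarrow> 'n option \<Rightarrow> 'n \<Rightarrow> real" where
  "N2 c cf a j a' j' = (\<Sum>f\<in>Fset c. if f j = a \<and> f j' = a' then (\<Prod>i\<in>UNIV. cf (f i) i) else 0)"

lemma N1_eq:
  fixes L :: "real^'n::finite^'n"
  assumes L: "L = transpose (Vm c one cf)" and d: "det L \<noteq> 0"
  shows "N1 c cf a j = cf a j * (matrix_inv L *v uvec c one a j) $ j * det L"
proof -
  have "N1 c cf a j = cf a j * det (Vm c one (upd1 cf j a))"
    unfolding N1_def MT sum_distrib_left prod_upd1 ..
  also have "\<dots> = cf a j * ((matrix_inv L *v uvec c one a j) $ j * det L)"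
    using G1[OF L d] by simp
  finally show ?thesis by (simp add: mult.assoc)
qed

lemma N2_eq:
  fixes L :: "real^'n::finite^'n"
  assumes L: "L = transpose (Vm c one cf)" and d: "det L \<noteq> 0"
  defines "Y \<equiv> \<lambda>a j. matrix_inv L *v uvec c one a j"
  shows "N2 c cf a j a' j' = (if a = a' \<and> j = j' then N1 c cf a j else 0)
     + N1 c cf a j * N1 c cf a' j' / det L - det L * (cf a j * cf a' j' * Y a j $ j' * Y a' j' $ j)"
proof (cases "j = j'")
  case True
  have "N2 c cf a j a' j' = (if a = a' then N1 c cf a j else 0)"
    unfolding N2_def N1_def using True by (cases "a = a'") (auto intro!: sum.neutral)
  moreover have "N1 c cf a j * N1 c cf a' j' / det L = det L * (cf a j * cf a' j' * Y a j $ j' * Y a' j' $ j)"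
    unfolding N1_eq[OF L d] Y_def using True d by (simp add: field_simps)
  ultimately show ?thesis using True by simp
next
  case False
  have "N2 c cf a j a' j' = cf a j * cf a' j' * det (Vm c one (upd1 (upd1 cf j a) j' a'))"
    unfolding N2_def MT sum_distrib_left prod_upd2[OF False] ..
  also have "\<dots> = cf a j * cf a' j' * (det L * (Y a j $ j * Y a' j' $ j' - Y a j $ j' * Y a' j' $ j))"
    unfolding G2[OF L d False] Y_def ..
  finally have "N2 c cf a j a' j' = cf a j * cf a' j' * (det L * (Y a j $ j * Y a' j' $ j' - Y a j $ j' * Y a' j' $ j))" .
  then show ?thesis
    unfolding N1_eq[OF L d] Y_def using False d by (simp add: field_simps)
qed

lemma alg_i:
  fixes R S N1 :: "'a::finite \<Rightarrow> 'n::finite \<Rightarrow> real"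
  shows "(\<Sum>j\<in>UNIV. \<Sum>a\<in>UNIV. \<Sum>j'\<in>UNIV. \<Sum>a'\<in>UNIV. R a j * S a' j' * (if a = a' \<and> j = j' then N1 a j else 0))
       = (\<Sum>a\<in>UNIV. \<Sum>j\<in>UNIV. N1 a j * R a j * S a j)"
proof -
  have inner: "(\<Sum>j'\<in>UNIV. \<Sum>a'\<in>UNIV. R a j * S a' j' * (if a = a' \<and> j = j' then N1 a j else 0)) = N1 a j * R a j * S a j" for a j
  proof -
    have h: "R a j * S a' j' * (if a = a' \<and> j = j' then N1 a j else 0) = (if a' = a then (if j' = j then R a j * S a j * N1 a j else 0) else 0)" for a' j'
      by auto
    show ?thesis unfolding h by (simp add: sum.delta)
  qed
  show ?thesis unfolding inner by (rule sum.swap)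
qed

lemma alg_ii:
  fixes R S N1 :: "'a::finite \<Rightarrow> 'n::finite \<Rightarrow> real"
  shows "(\<Sum>j\<in>UNIV. \<Sum>a\<in>UNIV. \<Sum>j'\<in>UNIV. \<Sum>a'\<in>UNIV. R a j * S a' j' * (N1 a j * N1 a' j' / Z))
       = (1 / Z) * (\<Sum>j\<in>UNIV. \<Sum>a\<in>UNIV. N1 a j * R a j) * (\<Sum>j\<in>UNIV. \<Sum>a\<in>UNIV. N1 a j * S a j)"
proof -
  let ?X = "\<lambda>j a j' a'. R a j * S a' j' * (N1 a j * N1 a' j' / Z)"
  have "(\<Sum>j\<in>UNIV. \<Sum>a\<in>UNIV. \<Sum>j'\<in>UNIV. \<Sum>a'\<in>UNIV. ?X j a j' a') = (\<Sum>j\<in>UNIV. \<Sum>j'\<in>UNIV. \<Sum>a\<in>UNIV. \<Sum>a'\<in>UNIV. ?X j a j' a')"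
    by (intro sum.cong refl sum.swap)
  also have "\<dots> = (1 / Z) * (\<Sum>j\<in>UNIV. \<Sum>a\<in>UNIV. N1 a j * R a j) * (\<Sum>j\<in>UNIV. \<Sum>a\<in>UNIV. N1 a j * S a j)"
    by (simp add: sum_distrib_left sum_distrib_right mult_ac)
  finally show ?thesis .
qed

lemma alg_iii:
  fixes R S cf :: "'a::finite \<Rightarrow> 'n::finite \<Rightarrow> real" and Yv :: "'a \<Rightarrow> 'n \<Rightarrow> 'n \<Rightarrow> real"
  shows "(\<Sum>j\<in>UNIV. \<Sum>a\<in>UNIV. \<Sum>j'\<in>UNIV. \<Sum>a'\<in>UNIV. R a j * S a' j' * (Z * (cf a j * cf a' j' * Yv a j j' * Yv a' j' j)))
       = Z * (\<Sum>j'\<in>UNIV. \<Sum>l'\<in>UNIV. (\<Sum>a\<in>UNIV. cf a l' * R a l' * Yv a l' j') * (\<Sum>a'\<in>UNIV. cf a' j' * S a' j' * Yv a' j' l'))"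
proof -
  let ?X = "\<lambda>j a j' a'. R a j * S a' j' * (Z * (cf a j * cf a' j' * Yv a j j' * Yv a' j' j))"
  have "(\<Sum>j\<in>UNIV. \<Sum>a\<in>UNIV. \<Sum>j'\<in>UNIV. \<Sum>a'\<in>UNIV. ?X j a j' a') = (\<Sum>j\<in>UNIV. \<Sum>j'\<in>UNIV. \<Sum>a\<in>UNIV. \<Sum>a'\<in>UNIV. ?X j a j' a')"
    by (intro sum.cong refl sum.swap)
  also have "\<dots> = (\<Sum>j\<in>UNIV. \<Sum>j'\<in>UNIV. \<Sum>a'\<in>UNIV. \<Sum>a\<in>UNIV. ?X j a j' a')"
    by (intro sum.cong refl sum.swap)
  also have "\<dots> = (\<Sum>j'\<in>UNIV. \<Sum>j\<in>UNIV. \<Sum>a'\<in>UNIV. \<Sum>a\<in>UNIV. ?X j a j' a')"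
    by (rule sum.swap)
  also have "\<dots> = Z * (\<Sum>j'\<in>UNIV. \<Sum>l'\<in>UNIV. (\<Sum>a\<in>UNIV. cf a l' * R a l' * Yv a l' j') * (\<Sum>a'\<in>UNIV. cf a' j' * S a' j' * Yv a' j' l'))"
    by (simp add: sum_distrib_left sum_distrib_right mult_ac)
  finally show ?thesis .
qed

lemma alg_all:
  fixes R S N1 cf :: "'a::finite \<Rightarrow> 'n::finite \<Rightarrow> real" and Yv :: "'a \<Rightarrow> 'n \<Rightarrow> 'n \<Rightarrow> real"
    and N2 :: "'a \<Rightarrow> 'n \<Rightarrow> 'a \<Rightarrow> 'n \<Rightarrow> real"
  assumes K: "\<And>a j a' j'. N2 a j a' j' = (if a = a' \<and> j = j' then N1 a j else 0)
     + N1 a j * N1 a' j' / Z - Z * (cf a j * cf a' j' * Yv a j j' * Yv a' j' j)"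
  shows "(\<Sum>j\<in>UNIV. \<Sum>a\<in>UNIV. \<Sum>j'\<in>UNIV. \<Sum>a'\<in>UNIV. R a j * S a' j' * N2 a j a' j')
   = (\<Sum>a\<in>UNIV. \<Sum>j\<in>UNIV. N1 a j * R a j * S a j)
     + (1 / Z) * (\<Sum>j\<in>UNIV. \<Sum>a\<in>UNIV. N1 a j * R a j) * (\<Sum>j\<in>UNIV. \<Sum>a\<in>UNIV. N1 a j * S a j)
     - Z * (\<Sum>j'\<in>UNIV. \<Sum>l'\<in>UNIV. (\<Sum>a\<in>UNIV. cf a l' * R a l' * Yv a l' j') * (\<Sum>a'\<in>UNIV. cf a' j' * S a' j' * Yv a' j' l'))"
proof -
  have "(\<Sum>j\<in>UNIV. \<Sum>a\<in>UNIV. \<Sum>j'\<in>UNIV. \<Sum>a'\<in>UNIV. R a j * S a' j' * N2 a j a' j')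
    = (\<Sum>j\<in>UNIV. \<Sum>a\<in>UNIV. \<Sum>j'\<in>UNIV. \<Sum>a'\<in>UNIV. R a j * S a' j' * (if a = a' \<and> j = j' then N1 a j else 0))
    + (\<Sum>j\<in>UNIV. \<Sum>a\<in>UNIV. \<Sum>j'\<in>UNIV. \<Sum>a'\<in>UNIV. R a j * S a' j' * (N1 a j * N1 a' j' / Z))
    - (\<Sum>j\<in>UNIV. \<Sum>a\<in>UNIV. \<Sum>j'\<in>UNIV. \<Sum>a'\<in>UNIV. R a j * S a' j' * (Z * (cf a j * cf a' j' * Yv a j j' * Yv a' j' j)))"
    unfolding K by (simp add: algebra_simps sum.distrib sum_subtractf)
  then show ?thesis unfolding alg_i alg_ii alg_iii .
qed

lemma sumE:
  fixes g :: "'n::finite option \<Rightarrow> 'n option \<Rightarrow> 'v::comm_monoid_add"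
  assumes z: "\<And>a b. (a,b) \<notin> E \<Longrightarrow> g a b = 0" and nr: "\<And>a. (a, None) \<notin> E"
  shows "(\<Sum>(a,b)\<in>E. g a b) = (\<Sum>a\<in>UNIV. \<Sum>j\<in>UNIV. g a (Some j))"
proof -
  have "(\<Sum>(a,b)\<in>E. g a b) = (\<Sum>(a,b)\<in>UNIV. g a b)"
    by (rule sum.mono_neutral_left) (auto simp: z)
  also have "\<dots> = (\<Sum>a\<in>UNIV. \<Sum>b\<in>UNIV. g a b)"
    by (simp add: sum.cartesian_product)
  also have "\<dots> = (\<Sum>a\<in>UNIV. \<Sum>j\<in>UNIV. g a (Some j))"
    by (simp add: sum_option z nr)
  finally show ?thesis .
qed

lemma tree_to_F:
  fixes E :: "('n::finite option \<times> 'n option) set" and X :: "_ \<Rightarrow> real"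
  assumes nr: "\<forall>(i,j)\<in>E. j \<noteq> root" and w0: "\<And>a b. (a,b) \<notin> E \<Longrightarrow> w a b = 0"
  shows "(\<Sum>d\<in>trees c E. tree_weight w d * X d) = (\<Sum>f\<in>Fset c. (\<Prod>j\<in>UNIV. w (f j) (Some j)) * X (Gf f))"
proof -
  have "(\<Sum>d\<in>trees c E. tree_weight w d * X d) = (\<Sum>f\<in>FE c E. tree_weight w (Gf f) * X (Gf f))"
    using sum.reindex_bij_betw[OF tree_bij[OF nr], of "\<lambda>d. tree_weight w d * X d" c] by simp
  also have "\<dots> = (\<Sum>f\<in>FE c E. (\<Prod>j\<in>UNIV. w (f j) (Some j)) * X (Gf f))"
    by (simp add: tree_weight_Gf)
  also have "\<dots> = (\<Sum>f\<in>Fset c. (\<Prod>j\<in>UNIV. w (f j) (Some j)) * X (Gf f))"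
  proof (rule sum.mono_neutral_left)
    show "FE c E \<subseteq> Fset c" by (auto simp: FE_def)
    show "\<forall>f\<in>Fset c - FE c E. (\<Prod>j\<in>UNIV. w (f j) (Some j)) * X (Gf f) = 0"
    proof
      fix f assume "f \<in> Fset c - FE c E"
      then obtain j where "(f j, Some j) \<notin> E" by (auto simp: FE_def)
      then have "w (f j) (Some j) = 0" by (rule w0)
      then have "(\<Prod>j\<in>UNIV. w (f j) (Some j)) = 0" by (meson UNIV_I finite prod_zero)
      then show "(\<Prod>j\<in>UNIV. w (f j) (Some j)) * X (Gf f) = 0" by simp
    qed
  qed simp
  finally show ?thesis .
qed

lemma expand_t:
  fixes R S :: "'a::finite \<Rightarrow> 'n::finite \<Rightarrow> real" and F :: "('n \<Rightarrow> 'a) set" and P :: "('n \<Rightarrow> 'a) \<Rightarrow> real"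
  assumes fin: "finite F"
  shows "(\<Sum>f\<in>F. P f * ((\<Sum>j\<in>UNIV. R (f j) j) * (\<Sum>j\<in>UNIV. S (f j) j)))
    = (\<Sum>j\<in>UNIV. \<Sum>a\<in>UNIV. \<Sum>j'\<in>UNIV. \<Sum>a'\<in>UNIV. R a j * S a' j' *
        (\<Sum>f\<in>F. if f j = a \<and> f j' = a' then P f else 0))"
proof -
  have e1: "(\<Sum>f\<in>F. P f * ((\<Sum>j\<in>UNIV. R (f j) j) * (\<Sum>j\<in>UNIV. S (f j) j)))
     = (\<Sum>f\<in>F. \<Sum>j\<in>UNIV. \<Sum>j'\<in>UNIV. P f * R (f j) j * S (f j') j')"
    unfolding sum_product by (simp add: sum_distrib_left mult_ac)
  also have "\<dots> = (\<Sum>j\<in>UNIV. \<Sum>f\<in>F. \<Sum>j'\<in>UNIV. P f * R (f j) j * S (f j') j')"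
    by (rule sum.swap)
  also have "\<dots> = (\<Sum>j\<in>UNIV. \<Sum>j'\<in>UNIV. \<Sum>f\<in>F. P f * R (f j) j * S (f j') j')"
    by (intro sum.cong refl sum.swap)
  also have "\<dots> = (\<Sum>j\<in>UNIV. \<Sum>j'\<in>UNIV. \<Sum>a\<in>UNIV. \<Sum>a'\<in>UNIV. R a j * S a' j' *
        (\<Sum>f\<in>F. if f j = a \<and> f j' = a' then P f else 0))"
  proof (intro sum.cong refl)
    fix j j'
    have "(\<Sum>a\<in>UNIV. \<Sum>a'\<in>UNIV. R a j * S a' j' * (\<Sum>f\<in>F. if f j = a \<and> f j' = a' then P f else 0))
      = (\<Sum>a\<in>UNIV. \<Sum>a'\<in>UNIV. \<Sum>f\<in>F. if a = f j \<and> a' = f j' then P f * R (f j) j * S (f j') j' else 0)"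
      by (intro sum.cong refl) (auto simp: sum_distrib_left intro!: sum.cong)
    also have "\<dots> = (\<Sum>a\<in>UNIV. \<Sum>f\<in>F. \<Sum>a'\<in>UNIV. if a = f j \<and> a' = f j' then P f * R (f j) j * S (f j') j' else 0)"
      by (intro sum.cong refl sum.swap)
    also have "\<dots> = (\<Sum>f\<in>F. \<Sum>a\<in>UNIV. \<Sum>a'\<in>UNIV. if a = f j \<and> a' = f j' then P f * R (f j) j * S (f j') j' else 0)"
      by (rule sum.swap)
    also have "\<dots> = (\<Sum>f\<in>F. P f * R (f j) j * S (f j') j')"
    proof (intro sum.cong refl)
      fix f
      have "(\<Sum>a\<in>UNIV. \<Sum>a'\<in>UNIV. if a = f j \<and> a' = f j' then P f * R (f j) j * S (f j') j' else 0)
          = (\<Sum>a\<in>UNIV. if a = f j then (\<Sum>a'\<in>UNIV. if a' = f j' then P f * R (f j) j * S (f j') j' else 0) else 0)"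
        by (intro sum.cong refl) auto
      also have "\<dots> = P f * R (f j) j * S (f j') j'" by simp
      finally show "(\<Sum>a\<in>UNIV. \<Sum>a'\<in>UNIV. if a = f j \<and> a' = f j' then P f * R (f j) j * S (f j') j' else 0)
          = P f * R (f j) j * S (f j') j'" .
    qed
    finally show "(\<Sum>f\<in>F. P f * R (f j) j * S (f j') j') = (\<Sum>a\<in>UNIV. \<Sum>a'\<in>UNIV. R a j * S a' j' *
        (\<Sum>f\<in>F. if f j = a \<and> f j' = a' then P f else 0))" by simp
  qed
  also have "\<dots> = (\<Sum>j\<in>UNIV. \<Sum>a\<in>UNIV. \<Sum>j'\<in>UNIV. \<Sum>a'\<in>UNIV. R a j * S a' j' *
        (\<Sum>f\<in>F. if f j = a \<and> f j' = a' then P f else 0))"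
    by (intro sum.cong refl sum.swap)
  finally show ?thesis .
qed

lemma expand_r:
  fixes R :: "'a::finite \<Rightarrow> 'n::finite \<Rightarrow> real" and F :: "('n \<Rightarrow> 'a) set" and P :: "('n \<Rightarrow> 'a) \<Rightarrow> real"
  assumes fin: "finite F"
  shows "(\<Sum>f\<in>F. P f * (\<Sum>j\<in>UNIV. R (f j) j))
    = (\<Sum>j\<in>UNIV. \<Sum>a\<in>UNIV. (\<Sum>f\<in>F. if f j = a then P f else 0) * R a j)"
proof -
  have "(\<Sum>f\<in>F. P f * (\<Sum>j\<in>UNIV. R (f j) j)) = (\<Sum>f\<in>F. \<Sum>j\<in>UNIV. P f * R (f j) j)"
    by (simp add: sum_distrib_left)
  also have "\<dots> = (\<Sum>j\<in>UNIV. \<Sum>f\<in>F. P f * R (f j) j)" by (rule sum.swap)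
  also have "\<dots> = (\<Sum>j\<in>UNIV. \<Sum>a\<in>UNIV. (\<Sum>f\<in>F. if f j = a then P f else 0) * R a j)"
  proof (intro sum.cong refl)
    fix j
    have "(\<Sum>a\<in>UNIV. (\<Sum>f\<in>F. if f j = a then P f else 0) * R a j)
        = (\<Sum>a\<in>UNIV. \<Sum>f\<in>F. if a = f j then P f * R (f j) j else 0)"
      by (auto simp: sum_distrib_right intro!: sum.cong)
    also have "\<dots> = (\<Sum>f\<in>F. \<Sum>a\<in>UNIV. if a = f j then P f * R (f j) j else 0)" by (rule sum.swap)
    also have "\<dots> = (\<Sum>f\<in>F. P f * R (f j) j)" by simp
    finally show "(\<Sum>f\<in>F. P f * R (f j) j) = (\<Sum>a\<in>UNIV. (\<Sum>f\<in>F. if f j = a then P f else 0) * R a j)" by simp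
  qed
  finally show ?thesis .
qed

lemma main_lemma:
  fixes E :: "('n::finite node \<times> 'n node) set"
    and w :: "'n node \<Rightarrow> 'n node \<Rightarrow> real"
    and c :: lap_case and one :: 'n
    and r :: "'n node \<Rightarrow> 'n node \<Rightarrow> real^'r"
    and s :: "'n node \<Rightarrow> 'n node \<Rightarrow> real^'s"
  assumes G: "rooted_wdigraph E w"
    and Zpos: "det (lap c one w) > 0"
  defines "L \<equiv> lap c one w"
  defines "B \<equiv> matrix_inv (transpose L)"
  defines "rh \<equiv> (\<lambda>j' l'. \<Sum>(k,l)\<in>E. \<Sum>k'\<in>UNIV.
                 (B $ k' $ j' * lap_deriv c one w k l k' l' * w k l) *\<^sub>R r k l)"
  defines "sh \<equiv> (\<lambda>j' l'. \<Sum>(i,j)\<in>E. \<Sum>i'\<in>UNIV.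
                 (B $ i' $ l' * lap_deriv c one w i j i' j' * w i j) *\<^sub>R s i j)"
  defines "tbar \<equiv> (\<Sum>d\<in>trees c E. tree_weight w d *\<^sub>R outer (tree_sum r d) (tree_sum s d))"
  defines "rbar \<equiv> (\<Sum>d\<in>trees c E. tree_weight w d *\<^sub>R tree_sum r d)"
  defines "sbar \<equiv> (\<Sum>d\<in>trees c E. tree_weight w d *\<^sub>R tree_sum s d)"
  defines "fbar \<equiv> (\<Sum>(i,j)\<in>E. edge_bar (trees c E) w i j *\<^sub>R outer (r i j) (s i j))"
  shows "tbar = fbar + (1 / det L) *\<^sub>R outer rbar sbar
                - det L *\<^sub>R (\<Sum>j'\<in>UNIV. \<Sum>l'\<in>UNIV. outer (rh j' l') (sh j' l'))"
proof -
  note Gd = G[unfolded rooted_wdigraph_def]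
  have nr: "\<forall>(i,j)\<in>E. j \<noteq> root" using Gd by auto
  have w0: "\<And>a b. (a,b) \<notin> E \<Longrightarrow> w a b = 0" using Gd by auto
  have nrE: "\<And>a. (a, None) \<notin> E" using nr by (auto simp: root_def)
  define cf where "cf = (\<lambda>a j. w a (Some j))"
  have LV: "L = transpose (Vm c one cf)" unfolding L_def cf_def by (rule lap_Vm)
  have d: "det L \<noteq> 0" using Zpos L_def by simp
  define Y where "Y = (\<lambda>a j. matrix_inv L *v uvec c one a j)"
  have K: "\<And>a j a' j'. N2 c cf a j a' j' = (if a = a' \<and> j = j' then N1 c cf a j else 0)
     + N1 c cf a j * N1 c cf a' j' / det L - det L * (cf a j * cf a' j' * Y a j $ j' * Y a' j' $ j)"
    using N2_eq[OF LV d] unfolding Y_def by simp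
  have BT: "B = transpose (matrix_inv L)" unfolding B_def using inv_transpose[OF d] .
  have finF: "finite (Fset c)" by simp
  have Pcf: "(\<Prod>j\<in>UNIV. w (f j) (Some j)) = (\<Prod>j\<in>UNIV. cf (f j) j)" for f by (simp add: cf_def)
  show ?thesis
  proof (subst vec_eq_iff, intro allI, subst vec_eq_iff, intro allI)
    fix \<alpha> \<beta>
    define R where "R = (\<lambda>a j. r a (Some j) $ \<alpha>)"
    define S where "S = (\<lambda>a j. s a (Some j) $ \<beta>)"
    have T: "tbar $ \<alpha> $ \<beta> = (\<Sum>j\<in>UNIV. \<Sum>a\<in>UNIV. \<Sum>j'\<in>UNIV. \<Sum>a'\<in>UNIV. R a j * S a' j' * N2 c cf a j a' j')"
    proof -
      have "tbar $ \<alpha> $ \<beta> = (\<Sum>d\<in>trees c E. tree_weight w d * (tree_sum r d $ \<alpha> * tree_sum s d $ \<beta>))"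
        unfolding tbar_def by (simp add: sum_component outer_def)
      also have "\<dots> = (\<Sum>f\<in>Fset c. (\<Prod>j\<in>UNIV. w (f j) (Some j)) * (tree_sum r (Gf f) $ \<alpha> * tree_sum s (Gf f) $ \<beta>))"
        by (rule tree_to_F[OF nr w0])
      also have "\<dots> = (\<Sum>f\<in>Fset c. (\<Prod>j\<in>UNIV. cf (f j) j) * ((\<Sum>j\<in>UNIV. R (f j) j) * (\<Sum>j\<in>UNIV. S (f j) j)))"
        by (simp add: Pcf tree_sum_Gf sum_component R_def S_def)
      also have "\<dots> = (\<Sum>j\<in>UNIV. \<Sum>a\<in>UNIV. \<Sum>j'\<in>UNIV. \<Sum>a'\<in>UNIV. R a j * S a' j' * N2 c cf a j a' j')"
        unfolding N2_def by (rule expand_t[OF finF])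
      finally show ?thesis .
    qed
    have Rb: "rbar $ \<alpha> = (\<Sum>j\<in>UNIV. \<Sum>a\<in>UNIV. N1 c cf a j * R a j)"
    proof -
      have "rbar $ \<alpha> = (\<Sum>d\<in>trees c E. tree_weight w d * tree_sum r d $ \<alpha>)"
        unfolding rbar_def by (simp add: sum_component)
      also have "\<dots> = (\<Sum>f\<in>Fset c. (\<Prod>j\<in>UNIV. w (f j) (Some j)) * tree_sum r (Gf f) $ \<alpha>)"
        by (rule tree_to_F[OF nr w0])
      also have "\<dots> = (\<Sum>f\<in>Fset c. (\<Prod>j\<in>UNIV. cf (f j) j) * (\<Sum>j\<in>UNIV. R (f j) j))"
        by (simp add: Pcf tree_sum_Gf sum_component R_def)
      also have "\<dots> = (\<Sum>j\<in>UNIV. \<Sum>a\<in>UNIV. N1 c cf a j * R a j)"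
        unfolding N1_def by (rule expand_r[OF finF])
      finally show ?thesis .
    qed
    have Sb: "sbar $ \<beta> = (\<Sum>j\<in>UNIV. \<Sum>a\<in>UNIV. N1 c cf a j * S a j)"
    proof -
      have "sbar $ \<beta> = (\<Sum>d\<in>trees c E. tree_weight w d * tree_sum s d $ \<beta>)"
        unfolding sbar_def by (simp add: sum_component)
      also have "\<dots> = (\<Sum>f\<in>Fset c. (\<Prod>j\<in>UNIV. w (f j) (Some j)) * tree_sum s (Gf f) $ \<beta>)"
        by (rule tree_to_F[OF nr w0])
      also have "\<dots> = (\<Sum>f\<in>Fset c. (\<Prod>j\<in>UNIV. cf (f j) j) * (\<Sum>j\<in>UNIV. S (f j) j))"
        by (simp add: Pcf tree_sum_Gf sum_component S_def)
      also have "\<dots> = (\<Sum>j\<in>UNIV. \<Sum>a\<in>UNIV. N1 c cf a j * S a j)"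
        unfolding N1_def by (rule expand_r[OF finF])
      finally show ?thesis .
    qed
    have EB: "edge_bar (trees c E) w a (Some j) = N1 c cf a j" for a j
    proof -
      have "edge_bar (trees c E) w a (Some j) = (\<Sum>d\<in>trees c E. tree_weight w d * (if (a, Some j) \<in> d then 1 else 0))"
        unfolding edge_bar_def by (simp add: sum.inter_filter[symmetric] if_distrib[of "\<lambda>t. _ * t"] cong: if_cong)
      also have "\<dots> = (\<Sum>f\<in>Fset c. (\<Prod>j\<in>UNIV. w (f j) (Some j)) * (if (a, Some j) \<in> Gf f then 1 else 0))"
        by (rule tree_to_F[OF nr w0])
      also have "\<dots> = N1 c cf a j"
        unfolding N1_def by (intro sum.cong refl) (auto simp: Gf_in Pcf)
      finally show ?thesis .
    qed
    have EB0: "edge_bar (trees c E) w a b = 0" if "(a, b) \<notin> E" for a b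
    proof -
      have e: "{d \<in> trees c E. (a, b) \<in> d} = {}" using that by (auto simp: trees_def is_tree_def)
      show ?thesis unfolding edge_bar_def e by simp
    qed
    have Fb: "fbar $ \<alpha> $ \<beta> = (\<Sum>a\<in>UNIV. \<Sum>j\<in>UNIV. N1 c cf a j * R a j * S a j)"
    proof -
      have "fbar $ \<alpha> $ \<beta> = (\<Sum>(i,j)\<in>E. edge_bar (trees c E) w i j * (r i j $ \<alpha> * s i j $ \<beta>))"
        unfolding fbar_def by (simp add: sum_component outer_def case_prod_beta')
      also have "\<dots> = (\<Sum>a\<in>UNIV. \<Sum>j\<in>UNIV. edge_bar (trees c E) w a (Some j) * (r a (Some j) $ \<alpha> * s a (Some j) $ \<beta>))"
        by (rule sumE) (auto simp: EB0 nrE)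
      also have "\<dots> = (\<Sum>a\<in>UNIV. \<Sum>j\<in>UNIV. N1 c cf a j * R a j * S a j)"
        by (simp add: EB R_def S_def mult.assoc)
      finally show ?thesis .
    qed
    have Yc: "Y a l $ j' = (\<Sum>k'\<in>UNIV. B $ k' $ j' * uvec c one a l $ k')" for a l j'
      unfolding Y_def BT by (simp add: matrix_vector_mult_def transpose_def)
    have RH: "rh j' l' $ \<alpha> = (\<Sum>a\<in>UNIV. cf a l' * R a l' * Y a l' $ j')" for j' l'
    proof -
      have "rh j' l' $ \<alpha> = (\<Sum>(k,l)\<in>E. \<Sum>k'\<in>UNIV. B $ k' $ j' * lap_deriv c one w k l k' l' * w k l * r k l $ \<alpha>)"
        unfolding rh_def by (simp add: sum_component case_prod_beta')
      also have "\<dots> = (\<Sum>a\<in>UNIV. \<Sum>j\<in>UNIV. \<Sum>k'\<in>UNIV. B $ k' $ j' * lap_deriv c one w a (Some j) k' l' * w a (Some j) * r a (Some j) $ \<alpha>)"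
        by (rule sumE) (auto simp: w0 nrE)
      also have "\<dots> = (\<Sum>a\<in>UNIV. \<Sum>j\<in>UNIV. if j = l' then cf a l' * R a l' * (\<Sum>k'\<in>UNIV. B $ k' $ j' * uvec c one a l' $ k') else 0)"
        by (intro sum.cong refl) (auto simp: lap_deriv_eq cf_def R_def sum_distrib_left sum_distrib_right mult_ac)
      also have "\<dots> = (\<Sum>a\<in>UNIV. cf a l' * R a l' * Y a l' $ j')"
        by (simp add: Yc)
      finally show ?thesis .
    qed
    have SH: "sh j' l' $ \<beta> = (\<Sum>a\<in>UNIV. cf a j' * S a j' * Y a j' $ l')" for j' l'
    proof -
      have "sh j' l' $ \<beta> = (\<Sum>(k,l)\<in>E. \<Sum>k'\<in>UNIV. B $ k' $ l' * lap_deriv c one w k l k' j' * w k l * s k l $ \<beta>)"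
        unfolding sh_def by (simp add: sum_component case_prod_beta')
      also have "\<dots> = (\<Sum>a\<in>UNIV. \<Sum>j\<in>UNIV. \<Sum>k'\<in>UNIV. B $ k' $ l' * lap_deriv c one w a (Some j) k' j' * w a (Some j) * s a (Some j) $ \<beta>)"
        by (rule sumE) (auto simp: w0 nrE)
      also have "\<dots> = (\<Sum>a\<in>UNIV. \<Sum>j\<in>UNIV. if j = j' then cf a j' * S a j' * (\<Sum>k'\<in>UNIV. B $ k' $ l' * uvec c one a j' $ k') else 0)"
        by (intro sum.cong refl) (auto simp: lap_deriv_eq cf_def S_def sum_distrib_left sum_distrib_right mult_ac)
      also have "\<dots> = (\<Sum>a\<in>UNIV. cf a j' * S a j' * Y a j' $ l')"
        by (simp add: Yc)
      finally show ?thesis .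
    qed
    have RHS: "(fbar + (1 / det L) *\<^sub>R outer rbar sbar
                - det L *\<^sub>R (\<Sum>j'\<in>UNIV. \<Sum>l'\<in>UNIV. outer (rh j' l') (sh j' l'))) $ \<alpha> $ \<beta>
       = fbar $ \<alpha> $ \<beta> + (1 / det L) * (rbar $ \<alpha> * sbar $ \<beta>)
         - det L * (\<Sum>j'\<in>UNIV. \<Sum>l'\<in>UNIV. rh j' l' $ \<alpha> * sh j' l' $ \<beta>)"
      by (simp add: sum_component outer_def)
    have "tbar $ \<alpha> $ \<beta> = (\<Sum>a\<in>UNIV. \<Sum>j\<in>UNIV. N1 c cf a j * R a j * S a j)
     + (1 / det L) * (\<Sum>j\<in>UNIV. \<Sum>a\<in>UNIV. N1 c cf a j * R a j) * (\<Sum>j\<in>UNIV. \<Sum>a\<in>UNIV. N1 c cf a j * S a j)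
     - det L * (\<Sum>j'\<in>UNIV. \<Sum>l'\<in>UNIV. (\<Sum>a\<in>UNIV. cf a l' * R a l' * Y a l' $ j') * (\<Sum>a'\<in>UNIV. cf a' j' * S a' j' * Y a' j' $ l'))"
      unfolding T by (rule alg_all[where Yv = "\<lambda>a l j. Y a l $ j", OF K])
    then show "tbar $ \<alpha> $ \<beta> = (fbar + (1 / det L) *\<^sub>R outer rbar sbar
                - det L *\<^sub>R (\<Sum>j'\<in>UNIV. \<Sum>l'\<in>UNIV. outer (rh j' l') (sh j' l'))) $ \<alpha> $ \<beta>"
      unfolding RHS Fb Rb Sb RH SH by (simp add: mult.assoc)
  qed
qed

theorem mainTheorem6:
  fixes E :: "('n::finite node \<times> 'n node) set"
    and w :: "'n node \<Rightarrow> 'n node \<Rightarrow> real"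
    and c :: lap_case and one :: 'n
    and r :: "'n node \<Rightarrow> 'n node \<Rightarrow> real^'r"
    and s :: "'n node \<Rightarrow> 'n node \<Rightarrow> real^'s"
  assumes G: "rooted_wdigraph E w"
    and Zpos: "det (lap c one w) > 0"
  shows
   "(let L = lap c one w; Z = det L; D = trees c E; B = matrix_inv (transpose L);
         rh = (\<lambda>j' l'. \<Sum>(k,l)\<in>E. \<Sum>k'\<in>UNIV.
                 (B $ k' $ j' * lap_deriv c one w k l k' l' * w k l) *\<^sub>R r k l);
         sh = (\<lambda>j' l'. \<Sum>(i,j)\<in>E. \<Sum>i'\<in>UNIV.
                 (B $ i' $ l' * lap_deriv c one w i j i' j' * w i j) *\<^sub>R s i j);
         tbar = (\<Sum>d\<in>D. tree_weight w d *\<^sub>R outer (tree_sum r d) (tree_sum s d));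
         rbar = (\<Sum>d\<in>D. tree_weight w d *\<^sub>R tree_sum r d);
         sbar = (\<Sum>d\<in>D. tree_weight w d *\<^sub>R tree_sum s d);
         fbar = (\<Sum>(i,j)\<in>E. edge_bar D w i j *\<^sub>R outer (r i j) (s i j))
     in tbar = fbar + (1 / Z) *\<^sub>R outer rbar sbar
                - Z *\<^sub>R (\<Sum>j'\<in>UNIV. \<Sum>l'\<in>UNIV. outer (rh j' l') (sh j' l')))"
  unfolding Let_def by (rule main_lemma[OF G Zpos])

end
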